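(* Let $q$ be a prime power and $\mathcal{L}$ a non-empty set of lines of $\mathrm{PG}(n,q)$ satisfying (Pt), (Pl), (Sd) and (To) (see context). Let $M$ be a $4$-dimensional subspace of $\mathrm{PG}(n,q)$ and let $P$ be a $(q+1)$-$M$-point. Then one of the following holds: (a) every line through $P$ in the plane $\pi_P$ contains exactly one $(q+1)$-$M$-point other than $P$; (b) there exists a line through $P$ in $\pi_P$ containing no $(q+1)$-$M$-point other than $P$.
   Context: (Pt): every point of $\mathrm{PG}(n,q)$ lies on $0$ or $q+1$ lines of $\mathcal{L}$. (Pl): every plane contains $0$, $1$ or $q+1$ lines of $\mathcal{L}$. (Sd): every solid ($3$-dimensional subspace) contains $0$, $1$, $q+1$ or $2q+1$ lines of $\mathcal{L}$. (To): $|\mathcal{L}|\le q^5+q^4+q^3+q^2+q+1$. A point $X$ is a $(q+1)$-$M$-point if exactly $q+1$ lines of $\mathcal{L}$ pass through $X$ and are contained in $M$. For a point $P$ lying on lines of $\mathcal{L}$, $\pi_P$ denotes the subspace spanned by the $q+1$ lines of $\mathcal{L}$ through $P$ (under these hypotheses this is a plane). *)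

theory Defs
  imports "HOL-Analysis.Analysis"
begin

text \<open>PG(n,q) is modelled as the lattice of subspaces of the vector space 'k^'n over a
finite field 'k (so q = CARD('k), a prime power, and n = CARD('n) - 1).
A projective subspace of projective dimension k is a vector subspace of dimension k+1.\<close>

definition psub :: "nat \<Rightarrow> ('k::field ^ 'n) set \<Rightarrow> bool" where
  "psub k U \<longleftrightarrow> vec.subspace U \<and> vec.dim U = k + 1"

abbreviation ppoint where "ppoint U \<equiv> psub 0 U"
abbreviation pline where "pline U \<equiv> psub 1 U"
abbreviation pplane where "pplane U \<equiv> psub 2 U"
abbreviation psolid where "psolid U \<equiv> psub 3 U"

definition good_line_set :: "('k::{finite,field} ^ 'n) set set \<Rightarrow> bool" where
  "good_line_set L \<longleftrightarrow>
     (\<forall>l\<in>L. pline l) \<and>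
     (\<forall>X. ppoint X \<longrightarrow> card {l\<in>L. X \<subseteq> l} = 0 \<or> card {l\<in>L. X \<subseteq> l} = CARD('k) + 1) \<and>
     (\<forall>E. pplane E \<longrightarrow> card {l\<in>L. l \<subseteq> E} \<in> {0, 1, CARD('k) + 1}) \<and>
     (\<forall>S. psolid S \<longrightarrow> card {l\<in>L. l \<subseteq> S} \<in> {0, 1, CARD('k) + 1, 2 * CARD('k) + 1}) \<and>
     card L \<le> CARD('k)^5 + CARD('k)^4 + CARD('k)^3 + CARD('k)^2 + CARD('k) + 1"

definition qM_point :: "('k::{finite,field} ^ 'n) set set \<Rightarrow> ('k ^ 'n) set \<Rightarrow> ('k ^ 'n) set \<Rightarrow> bool" where
  "qM_point L M X \<longleftrightarrow> ppoint X \<and> card {l\<in>L. X \<subseteq> l \<and> l \<subseteq> M} = CARD('k) + 1"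

definition pi_sub :: "('k::field ^ 'n) set set \<Rightarrow> ('k ^ 'n) set \<Rightarrow> ('k ^ 'n) set" where
  "pi_sub L P = vec.span (\<Union>{l\<in>L. P \<subseteq> l})"

end

theory Submission
  imports Defs
begin


lemma sub_eq:
  fixes A B :: "('k::field ^ 'n) set"
  assumes "vec.subspace A" "vec.subspace B" "A \<subseteq> B" "vec.dim B \<le> vec.dim A"
  shows "A = B"
  using assms vec.subspace_dim_equal by blast

lemma dim_strict:
  fixes A B :: "('k::field ^ 'n) set"
  assumes "vec.subspace A" "vec.subspace B" "A \<subseteq> B" "A \<noteq> B"
  shows "vec.dim A < vec.dim B"
  using assms sub_eq[of A B] vec.dim_subset[of A B] by linarith

lemma dim_span_Un:
  fixes A B :: "('k::field ^ 'n) set"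
  assumes "vec.subspace A" "vec.subspace B"
  shows "vec.dim (vec.span (A \<union> B)) + vec.dim (A \<inter> B) = vec.dim A + vec.dim B"
proof -
  have a: "vec.span A = A" using assms(1) by (metis vec.span_eq_iff)
  have b: "vec.span B = B" using assms(2) by (metis vec.span_eq_iff)
  have "vec.span (A \<union> B) = {x + y |x y. x \<in> A \<and> y \<in> B}"
    using vec.span_Un[of A B] unfolding a b .
  then show ?thesis using vec.dim_sums_Int[OF assms] by simp
qed

lemma psub_sub: "psub k U \<Longrightarrow> vec.subspace U" by (simp add: psub_def)
lemma psub_dim: "psub k U \<Longrightarrow> vec.dim U = k + 1" by (simp add: psub_def)

lemma psub_eq:
  assumes "psub k A" "psub k B" "A \<subseteq> B" shows "A = B"
  using assms sub_eq[of A B] by (simp add: psub_def)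

lemma lines_meet_point:
  fixes l l' X Y :: "('k::field ^ 'n) set"
  assumes "pline l" "pline l'" "l \<noteq> l'" "ppoint X" "ppoint Y"
    "X \<subseteq> l" "X \<subseteq> l'" "Y \<subseteq> l" "Y \<subseteq> l'"
  shows "X = Y"
proof -
  have s: "vec.subspace (l \<inter> l')" using assms by (simp add: psub_def vec.subspace_inter)
  have "l \<inter> l' \<noteq> l" using assms psub_eq[of 1 l l'] by blast
  then have "vec.dim (l \<inter> l') < 2" using dim_strict[of "l \<inter> l'" l] s assms by (simp add: psub_def)
  then have "X = l \<inter> l'" "Y = l \<inter> l'"
    using sub_eq[of X "l \<inter> l'"] sub_eq[of Y "l \<inter> l'"] s assms by (auto simp: psub_def)
  then show ?thesis by simp
qed

lemma two_points_line:
  fixes X Y :: "('k::field ^ 'n) set"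
  assumes "ppoint X" "ppoint Y" "X \<noteq> Y"
  shows "pline (vec.span (X \<union> Y))"
proof -
  have s: "vec.subspace (X \<inter> Y)" using assms by (simp add: psub_def vec.subspace_inter)
  have "X \<inter> Y \<noteq> X" using assms psub_eq[of 0 X Y] by blast
  then have "vec.dim (X \<inter> Y) = 0" using dim_strict[of "X \<inter> Y" X] s assms by (simp add: psub_def)
  moreover have "vec.dim (vec.span (X \<union> Y)) + vec.dim (X \<inter> Y) = vec.dim X + vec.dim Y"
    using dim_span_Un[of X Y] assms by (simp add: psub_def)
  moreover have "vec.dim X = 1" "vec.dim Y = 1" using assms by (auto simp: psub_def)
  ultimately have "vec.dim (vec.span (X \<union> Y)) = 2" by linarith
  then show ?thesis unfolding psub_def using vec.subspace_span by auto
qed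

lemma two_lines_plane:
  fixes l l' X :: "('k::field ^ 'n) set"
  assumes "pline l" "pline l'" "l \<noteq> l'" "ppoint X" "X \<subseteq> l" "X \<subseteq> l'"
  shows "pplane (vec.span (l \<union> l'))"
proof -
  have s: "vec.subspace (l \<inter> l')" using assms by (simp add: psub_def vec.subspace_inter)
  have "l \<inter> l' \<noteq> l" using assms psub_eq[of 1 l l'] by blast
  then have "vec.dim (l \<inter> l') < 2" using dim_strict[of "l \<inter> l'" l] s assms by (simp add: psub_def)
  moreover have "vec.dim (l \<inter> l') \<ge> 1" using vec.dim_subset[of X "l \<inter> l'"] assms by (simp add: psub_def)
  ultimately have "vec.dim (l \<inter> l') = 1" by simp
  then show ?thesis using dim_span_Un[of l l'] assms by (simp add: psub_def vec.subspace_span)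
qed

lemma planes_share_line:
  fixes E F l l' :: "('k::field ^ 'n) set"
  assumes "pplane E" "pplane F" "pline l" "pline l'" "l \<noteq> l'"
    "l \<subseteq> E \<inter> F" "l' \<subseteq> E \<inter> F"
  shows "E = F"
proof -
  have s: "vec.subspace (E \<inter> F)" using assms by (simp add: psub_def vec.subspace_inter)
  have sl: "vec.span (l \<union> l') \<subseteq> E \<inter> F" using assms s vec.span_minimal by blast
  have s2: "vec.subspace (l \<inter> l')" using assms by (simp add: psub_def vec.subspace_inter)
  have "l \<inter> l' \<noteq> l" using assms psub_eq[of 1 l l'] by blast
  then have "vec.dim (l \<inter> l') < 2" using dim_strict[of "l \<inter> l'" l] s2 assms by (simp add: psub_def)
  then have "vec.dim (vec.span (l \<union> l')) \<ge> 3" using dim_span_Un[of l l'] assms by (simp add: psub_def)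
  then have "vec.dim (E \<inter> F) \<ge> 3" using vec.dim_subset[OF sl] by simp
  then have "E \<inter> F = E" "E \<inter> F = F" using sub_eq[of "E \<inter> F" E] sub_eq[of "E \<inter> F" F] s assms
    by (auto simp: psub_def)
  then show ?thesis by simp
qed




lemma card_span_insert:
  fixes S :: "('k::{finite,field} ^ 'n) set"
  assumes "v \<notin> vec.span S"
  shows "card (vec.span (insert v S)) = CARD('k) * card (vec.span S)"
proof -
  define f where "f = (\<lambda>(c::'k, u). c *s v + u)"
  have inj: "inj_on f (UNIV \<times> vec.span S)"
  proof (rule inj_onI)
    fix a b assume a: "a \<in> UNIV \<times> vec.span S" and b: "b \<in> UNIV \<times> vec.span S" and e: "f a = f b"
    obtain c u where cu: "a = (c, u)" by force
    obtain c' u' where cu': "b = (c', u')" by force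
    have u: "u \<in> vec.span S" "u' \<in> vec.span S" using a b cu cu' by auto
    have eq: "c *s v + u = c' *s v + u'" using e cu cu' by (simp add: f_def)
    have "(c - c') *s v = u' - u" using eq by (simp add: algebra_simps vector_sub_rdistrib)
    show "a = b"
    proof (cases "c = c'")
      case True then show ?thesis using eq cu cu' by simp
    next
      case False
      have "v = inverse (c - c') *s ((c - c') *s v)" using False
        by (metis vector_smult_assoc left_inverse right_minus_eq vector_smult_lid)
      also have "\<dots> = inverse (c - c') *s (u' - u)" using \<open>(c - c') *s v = u' - u\<close> by simp
      finally have "v \<in> vec.span S" using u by (metis vec.span_diff vec.span_scale)
      then show ?thesis using assms by simp
    qed
  qed
  have img: "f ` (UNIV \<times> vec.span S) = vec.span (insert v S)"
  proof
    show "f ` (UNIV \<times> vec.span S) \<subseteq> vec.span (insert v S)"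
    proof (clarsimp simp: f_def vec.span_breakdown_eq)
      fix a b assume "b \<in> vec.span S"
      then have "a *s v + b - a *s v \<in> vec.span S" by simp
      then show "\<exists>k. a *s v + b - k *s v \<in> vec.span S" by blast
    qed
    show "vec.span (insert v S) \<subseteq> f ` (UNIV \<times> vec.span S)"
    proof
      fix x assume "x \<in> vec.span (insert v S)"
      then obtain k where k: "x - k *s v \<in> vec.span S" using vec.span_breakdown_eq by blast
      have "x = f (k, x - k *s v)" by (simp add: f_def)
      then show "x \<in> f ` (UNIV \<times> vec.span S)" using k by blast
    qed
  qed
  have "card (vec.span (insert v S)) = card ((UNIV::'k set) \<times> vec.span S)"
    using card_image[OF inj] img by metis
  also have "\<dots> = CARD('k) * card (vec.span S)" by (simp add: card_cartesian_product)
  finally show ?thesis .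
qed

lemma card_indep:
  fixes B :: "('k::{finite,field} ^ 'n) set"
  assumes "vec.independent B"
  shows "card (vec.span B) = CARD('k) ^ card B"
proof -
  have "finite B" using assms vec.finiteI_independent by blast
  then show ?thesis using assms
  proof (induction B rule: finite_induct)
    case empty then show ?case by simp
  next
    case (insert v F)
    have iF: "vec.independent F" using insert.prems vec.independent_mono by blast
    have "v \<notin> vec.span F" using insert.prems insert.hyps vec.independent_insert by metis
    then show ?case using card_span_insert[of v F] insert iF by simp
  qed
qed

lemma card_subspace:
  fixes U :: "('k::{finite,field} ^ 'n) set"
  assumes "vec.subspace U"
  shows "card U = CARD('k) ^ vec.dim U"
proof -
  obtain B where B: "B \<subseteq> U" "vec.independent B" "U \<subseteq> vec.span B" "card B = vec.dim U"
    using vec.basis_exists by blast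
  have "vec.span B = U" using B assms vec.span_minimal by blast
  then show ?thesis using card_indep[OF B(2)] B(4) by simp
qed

lemma card_field_ge2: "CARD('k::{finite,field}) \<ge> 2"
proof -
  have "{0::'k, 1} \<subseteq> UNIV" by simp
  then have "card {0::'k, 1} \<le> CARD('k)" by (intro card_mono) auto
  then show ?thesis by simp
qed

lemma count_mid:
  fixes A B :: "('k::{finite,field} ^ 'n) set"
  assumes sA: "vec.subspace A" and sB: "vec.subspace B" and AB: "A \<subseteq> B"
    and d: "vec.dim B = vec.dim A + 2"
  shows "card {C. vec.subspace C \<and> A \<subseteq> C \<and> C \<subseteq> B \<and> vec.dim C = vec.dim A + 1} \<le> CARD('k) + 1"
proof -
  define q where "q = CARD('k)"
  define a where "a = vec.dim A"
  define x where "x = q ^ a"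
  define \<C> where "\<C> = {C. vec.subspace C \<and> A \<subseteq> C \<and> C \<subseteq> B \<and> vec.dim C = vec.dim A + 1}"
  have q2: "q \<ge> 2" unfolding q_def by (rule card_field_ge2)
  have x0: "x > 0" unfolding x_def using q2 by simp
  have cA: "card A = x" using card_subspace[OF sA] by (simp add: x_def q_def a_def)
  have cB: "card B = q * q * x" using card_subspace[OF sB] d by (simp add: x_def q_def a_def)
  have cC: "card (C - A) = q * x - x" if "C \<in> \<C>" for C
  proof -
    have "card C = q * x" using that card_subspace[of C] by (simp add: \<C>_def x_def q_def a_def)
    then show ?thesis using that cA by (simp add: \<C>_def card_Diff_subset)
  qed
  have disj: "(C - A) \<inter> (C' - A) = {}" if "C \<in> \<C>" "C' \<in> \<C>" "C \<noteq> C'" for C C'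
  proof (rule ccontr)
    assume "(C - A) \<inter> (C' - A) \<noteq> {}"
    then obtain v where v: "v \<in> C" "v \<in> C'" "v \<notin> A" by blast
    have sD: "vec.subspace (C \<inter> C')" using that vec.subspace_inter by (auto simp: \<C>_def)
    have "A \<subseteq> C \<inter> C'" "A \<noteq> C \<inter> C'" using that v by (auto simp: \<C>_def)
    then have "vec.dim (C \<inter> C') > a" using dim_strict[OF sA sD] by (simp add: a_def)
    then have "C \<inter> C' = C" "C \<inter> C' = C'" using that sD sub_eq[of "C \<inter> C'" C] sub_eq[of "C \<inter> C'" C']
      by (auto simp: \<C>_def a_def)
    then show False using that by simp
  qed
  have fin: "finite \<C>" by simp
  have "(\<Sum>C\<in>\<C>. card (C - A)) = card (\<Union>C\<in>\<C>. C - A)"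
    by (rule card_UN_disjoint[symmetric]) (use disj in auto)
  also have "\<dots> \<le> card (B - A)" by (rule card_mono) (auto simp: \<C>_def)
  also have "\<dots> = q * q * x - x" using cA cB AB by (simp add: card_Diff_subset)
  finally have "(\<Sum>C\<in>\<C>. card (C - A)) \<le> q * q * x - x" .
  moreover have "(\<Sum>C\<in>\<C>. card (C - A)) = card \<C> * (q * x - x)" using cC by simp
  ultimately have "card \<C> * (q * x - x) \<le> q * q * x - x" by simp
  moreover have "q * q * x - x = (q + 1) * (q * x - x)"
  proof -
    have "x \<le> q * x" using q2 by simp
    have "x \<le> q * q * x" using q2 by simp
    have "int (q * q * x - x) = int ((q + 1) * (q * x - x))"
      using \<open>x \<le> q * x\<close> \<open>x \<le> q * q * x\<close> by (simp add: of_nat_diff algebra_simps)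
    then show ?thesis by linarith
  qed
  moreover have "q * x - x > 0" using q2 x0 by simp
  ultimately have "card \<C> \<le> q + 1" by (metis mult_le_cancel2 not_gr0)
  then show ?thesis by (simp add: \<C>_def q_def)
qed




lemma gl_line: "good_line_set L \<Longrightarrow> l \<in> L \<Longrightarrow> pline l"
  unfolding good_line_set_def by (elim conjE) (erule bspec)
lemma gl_pt: "good_line_set (L::('k::{finite,field}^'n) set set) \<Longrightarrow> ppoint X \<Longrightarrow>
   card {l\<in>L. X \<subseteq> l} = 0 \<or> card {l\<in>L. X \<subseteq> l} = CARD('k) + 1"
  unfolding good_line_set_def by (elim conjE) (erule allE, erule mp)
lemma gl_pl: "good_line_set (L::('k::{finite,field}^'n) set set) \<Longrightarrow> pplane E \<Longrightarrow>
   card {l\<in>L. l \<subseteq> E} \<in> {0, 1, CARD('k) + 1}"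
  unfolding good_line_set_def by (elim conjE) (erule allE, erule mp)
lemma gl_sd0: "good_line_set (L::('k::{finite,field}^'n) set set) \<Longrightarrow> psolid S \<Longrightarrow>
   card {l\<in>L. l \<subseteq> S} \<in> {0, 1, CARD('k) + 1, 2 * CARD('k) + 1}"
  unfolding good_line_set_def by (elim conjE) (erule allE, erule mp)
lemma gl_sd: "good_line_set (L::('k::{finite,field}^'n) set set) \<Longrightarrow> psolid S \<Longrightarrow>
   card {l\<in>L. l \<subseteq> S} \<le> 2 * CARD('k) + 1"
proof -
  assume a: "good_line_set L" "psolid S"
  have "card {l\<in>L. l \<subseteq> S} = 0 \<or> card {l\<in>L. l \<subseteq> S} = 1 \<or> card {l\<in>L. l \<subseteq> S} = CARD('k) + 1
     \<or> card {l\<in>L. l \<subseteq> S} = 2 * CARD('k) + 1"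
    using gl_sd0[OF a] by (simp only: insert_iff empty_iff simp_thms)
  then show ?thesis by (elim disjE; linarith)
qed

lemma card_le1:
  assumes "finite A" "\<And>a b. a \<in> A \<Longrightarrow> b \<in> A \<Longrightarrow> a = b" shows "card A \<le> 1"
  using assms card_le_Suc0_iff_eq by (metis One_nat_def)

lemma three_sets:
  assumes "finite A" "finite B" "finite C" "card A = k" "card B = k" "card C = k"
    "card (A \<inter> B) \<le> 1" "card (A \<inter> C) \<le> 1" "card (B \<inter> C) \<le> 1"
  shows "card (A \<union> B \<union> C) + 3 \<ge> 3 * k"
proof -
  have 1: "card (A \<union> B) + card (A \<inter> B) = 2 * k" using card_Un_Int[of A B] assms by simp
  have "(A \<union> B) \<inter> C = (A \<inter> C) \<union> (B \<inter> C)" by blast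
  then have "card ((A \<union> B) \<inter> C) \<le> 2" using card_Un_le[of "A \<inter> C" "B \<inter> C"] assms by simp
  moreover have "card (A \<union> B \<union> C) + card ((A \<union> B) \<inter> C) = card (A \<union> B) + k"
    using card_Un_Int[of "A \<union> B" C] assms by simp
  ultimately show ?thesis using 1 assms by linarith
qed

lemma lines_planes_le1:
  assumes "good_line_set L" "pplane E" "pplane F" "E \<noteq> F"
  shows "card ({l\<in>L. l \<subseteq> E} \<inter> {l\<in>L. l \<subseteq> F}) \<le> 1"
  apply (rule card_le1)
   apply simp
  using planes_share_line[of E F] gl_line[OF assms(1)] assms by blast

lemma three_planes:
  fixes L :: "('k::{finite,field}^'n) set set"
  assumes gl: "good_line_set L" and S: "psolid S"
    and E: "pplane E1" "pplane E2" "pplane E3"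
    and d: "E1 \<noteq> E2" "E1 \<noteq> E3" "E2 \<noteq> E3"
    and sub: "E1 \<subseteq> S" "E2 \<subseteq> S" "E3 \<subseteq> S"
    and c: "card {l\<in>L. l \<subseteq> E1} = CARD('k) + 1" "card {l\<in>L. l \<subseteq> E2} = CARD('k) + 1"
           "card {l\<in>L. l \<subseteq> E3} = CARD('k) + 1"
  shows False
proof -
  have "card ({l\<in>L. l \<subseteq> E1} \<union> {l\<in>L. l \<subseteq> E2} \<union> {l\<in>L. l \<subseteq> E3}) + 3 \<ge> 3 * (CARD('k) + 1)"
    by (rule three_sets) (use c lines_planes_le1[OF gl] E d in auto)
  moreover have "card ({l\<in>L. l \<subseteq> E1} \<union> {l\<in>L. l \<subseteq> E2} \<union> {l\<in>L. l \<subseteq> E3}) \<le> card {l\<in>L. l \<subseteq> S}"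
    by (rule card_mono) (use sub in auto)
  moreover have "card {l\<in>L. l \<subseteq> S} \<le> 2 * CARD('k) + 1" using gl_sd[OF gl S] .
  moreover have "CARD('k) \<ge> 2" by (rule card_field_ge2)
  ultimately show False by arith
qed

lemma plane_two_lines:
  fixes L :: "('k::{finite,field}^'n) set set"
  assumes gl: "good_line_set L" and F: "pplane F" and l: "l \<in> L" "l' \<in> L" "l \<noteq> l'" "l \<subseteq> F" "l' \<subseteq> F"
  shows "card {l\<in>L. l \<subseteq> F} = CARD('k) + 1"
proof -
  have "card {l, l'} \<le> card {l\<in>L. l \<subseteq> F}" by (rule card_mono) (use l in auto)
  then have "card {l\<in>L. l \<subseteq> F} \<ge> 2" using l by simp
  moreover have "card {l\<in>L. l \<subseteq> F} = 0 \<or> card {l\<in>L. l \<subseteq> F} = 1 \<or> card {l\<in>L. l \<subseteq> F} = CARD('k) + 1"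
    using gl_pl[OF gl F] by (simp only: insert_iff empty_iff simp_thms)
  ultimately show ?thesis by linarith
qed

lemma full_point_plane:
  fixes L :: "('k::{finite,field}^'n) set set"
  assumes gl: "good_line_set L" and X: "ppoint X" and cX: "card {l\<in>L. X \<subseteq> l} = CARD('k) + 1"
  shows "pplane (pi_sub L X) \<and> {l\<in>L. l \<subseteq> pi_sub L X} = {l\<in>L. X \<subseteq> l}"
proof -
  define LX where "LX = {l\<in>L. X \<subseteq> l}"
  have q2: "CARD('k) \<ge> 2" by (rule card_field_ge2)
  have "\<not> card LX \<le> 1" using cX q2 by (simp add: LX_def)
  then obtain l1 l2 where l12: "l1 \<in> LX" "l2 \<in> LX" "l1 \<noteq> l2"
    using card_le1[of LX] by (auto simp: LX_def)
  have pl: "pline l" if "l \<in> LX" for l using that gl_line[OF gl] by (auto simp: LX_def)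
  define E where "E = vec.span (l1 \<union> l2)"
  have pE: "pplane E" unfolding E_def
    by (rule two_lines_plane[of _ _ X]) (use l12 pl X in \<open>auto simp: LX_def\<close>)
  have sE: "vec.subspace E" using pE by (simp add: psub_def)
  have l1E: "l1 \<subseteq> E" and l2E: "l2 \<subseteq> E" unfolding E_def using vec.span_superset by blast+
  have allin: "l3 \<subseteq> E" if l3: "l3 \<in> LX" for l3
  proof (rule ccontr)
    assume n: "\<not> l3 \<subseteq> E"
    have n1: "l3 \<noteq> l1" "l3 \<noteq> l2" using n l1E l2E by auto
    define E13 where "E13 = vec.span (l1 \<union> l3)"
    define E23 where "E23 = vec.span (l2 \<union> l3)"
    have p13: "pplane E13" unfolding E13_def
      by (rule two_lines_plane[of _ _ X]) (use l12 l3 n1 pl X in \<open>auto simp: LX_def\<close>)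
    have p23: "pplane E23" unfolding E23_def
      by (rule two_lines_plane[of _ _ X]) (use l12 l3 n1 pl X in \<open>auto simp: LX_def\<close>)
    define S where "S = vec.span (E \<union> l3)"
    have sl3: "vec.subspace l3" "vec.dim l3 = 2" using pl[OF l3] by (auto simp: psub_def)
    have sI: "vec.subspace (E \<inter> l3)" using sE sl3 vec.subspace_inter by blast
    have XI: "X \<subseteq> E \<inter> l3" using l1E l12 l3 by (auto simp: LX_def)
    have "vec.dim (E \<inter> l3) \<ge> 1" using vec.dim_subset[OF XI] X by (simp add: psub_def)
    moreover have "E \<inter> l3 \<noteq> l3" using n by blast
    then have "vec.dim (E \<inter> l3) < 2" using dim_strict[OF sI sl3(1)] sl3 by auto
    ultimately have "vec.dim (E \<inter> l3) = 1" by simp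
    moreover have "vec.dim S + vec.dim (E \<inter> l3) = vec.dim E + vec.dim l3"
      unfolding S_def by (rule dim_span_Un[OF sE sl3(1)])
    ultimately have "vec.dim S = 4" using pE sl3 by (simp add: psub_def)
    then have pS: "psolid S" by (simp add: psub_def S_def vec.subspace_span)
    have sS: "vec.subspace S" using pS by (simp add: psub_def)
    have ES: "E \<subseteq> S" "l3 \<subseteq> S" unfolding S_def using vec.span_superset by blast+
    have "E13 \<subseteq> S" unfolding E13_def by (rule vec.span_minimal[OF _ sS]) (use ES l1E in auto)
    moreover have "E23 \<subseteq> S" unfolding E23_def by (rule vec.span_minimal[OF _ sS]) (use ES l2E in auto)
    moreover have l3_13: "l3 \<subseteq> E13" "l1 \<subseteq> E13" unfolding E13_def using vec.span_superset by blast+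
    moreover have l3_23: "l3 \<subseteq> E23" "l2 \<subseteq> E23" unfolding E23_def using vec.span_superset by blast+
    moreover have "E \<noteq> E13" "E \<noteq> E23" using n l3_13 l3_23 by auto
    moreover have "E13 \<noteq> E23"
    proof
      assume e: "E13 = E23"
      have s13: "vec.subspace E13" using p13 by (simp add: psub_def)
      have "E \<subseteq> E13" unfolding E_def by (rule vec.span_minimal[OF _ s13]) (use l3_13 l3_23 e in auto)
      then have "E = E13" using psub_eq[OF pE p13] by simp
      then show False using n l3_13 by simp
    qed
    moreover have LL: "l1 \<in> L" "l2 \<in> L" "l3 \<in> L" using l12 l3 by (auto simp: LX_def)
    ultimately show False
      using three_planes[OF gl pS pE p13 p23] plane_two_lines[OF gl pE LL(1,2) l12(3) l1E l2E]
        plane_two_lines[OF gl p13 LL(1,3) n1(1)[symmetric]] plane_two_lines[OF gl p23 LL(2,3) n1(2)[symmetric]]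
        ES by blast
  qed
  have "pi_sub L X \<subseteq> E" unfolding pi_sub_def using allin sE vec.span_minimal
    by (metis (no_types, lifting) LX_def Sup_least)
  moreover have "E \<subseteq> pi_sub L X" unfolding pi_sub_def E_def
    by (rule vec.span_mono) (use l12 in \<open>auto simp: LX_def\<close>)
  ultimately have eq: "pi_sub L X = E" by simp
  have LL: "l1 \<in> L" "l2 \<in> L" using l12 by (auto simp: LX_def)
  have cE: "card {l\<in>L. l \<subseteq> E} = CARD('k) + 1"
    using plane_two_lines[OF gl pE LL l12(3) l1E l2E] .
  have "LX \<subseteq> {l\<in>L. l \<subseteq> E}" using allin by (auto simp: LX_def)
  then have "LX = {l\<in>L. l \<subseteq> E}" using card_subset_eq[of "{l\<in>L. l \<subseteq> E}" LX] cE cX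
    by (simp add: LX_def)
  then show ?thesis using eq pE by (simp add: LX_def)
qed




lemma qM_full:
  fixes L :: "('k::{finite,field}^'n) set set"
  assumes gl: "good_line_set L" and sM: "vec.subspace M" and X: "qM_point L M X"
  shows "ppoint X \<and> card {l\<in>L. X \<subseteq> l} = CARD('k) + 1 \<and> {l\<in>L. X \<subseteq> l} = {l\<in>L. X \<subseteq> l \<and> l \<subseteq> M}
         \<and> pi_sub L X \<subseteq> M"
proof -
  have pX: "ppoint X" using X by (simp add: qM_point_def)
  have cM: "card {l\<in>L. X \<subseteq> l \<and> l \<subseteq> M} = CARD('k) + 1" using X by (simp add: qM_point_def)
  have le: "card {l\<in>L. X \<subseteq> l \<and> l \<subseteq> M} \<le> card {l\<in>L. X \<subseteq> l}" by (rule card_mono) auto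
  have "card {l\<in>L. X \<subseteq> l} = 0 \<or> card {l\<in>L. X \<subseteq> l} = CARD('k) + 1" using gl_pt[OF gl pX] .
  then have c: "card {l\<in>L. X \<subseteq> l} = CARD('k) + 1" by (elim disjE) (use le cM in linarith)+
  have eq: "{l\<in>L. X \<subseteq> l \<and> l \<subseteq> M} = {l\<in>L. X \<subseteq> l}"
    by (rule card_subset_eq) (use c cM in auto)
  have "pi_sub L X \<subseteq> M" unfolding pi_sub_def
    by (rule vec.span_minimal[OF _ sM]) (use eq in blast)
  then show ?thesis using pX c eq by simp
qed

lemma full_distinct:
  fixes L :: "('k::{finite,field}^'n) set set"
  assumes gl: "good_line_set L" and X: "ppoint X" "card {l\<in>L. X \<subseteq> l} = CARD('k) + 1"
    and Y: "ppoint Y" "card {l\<in>L. Y \<subseteq> l} = CARD('k) + 1" and XY: "X \<noteq> Y"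
  shows "pi_sub L X \<noteq> pi_sub L Y"
proof
  assume e: "pi_sub L X = pi_sub L Y"
  have "{l\<in>L. X \<subseteq> l} = {l\<in>L. Y \<subseteq> l}"
    using full_point_plane[OF gl X] full_point_plane[OF gl Y] e by simp
  moreover have q2: "CARD('k) \<ge> 2" by (rule card_field_ge2)
  have "\<not> card {l\<in>L. X \<subseteq> l} \<le> 1" using X q2 by simp
  then obtain l l' where ll: "l \<in> {l\<in>L. X \<subseteq> l}" "l' \<in> {l\<in>L. X \<subseteq> l}" "l \<noteq> l'"
    using card_le1[of "{l\<in>L. X \<subseteq> l}"] by auto
  ultimately have "Y \<subseteq> l" "Y \<subseteq> l'" by auto
  then show False using lines_meet_point[of l l' X Y] ll X Y XY gl_line[OF gl] by auto
qed

lemma sum_ge1: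
  assumes "finite I" "\<And>i. i \<in> I \<Longrightarrow> f i \<ge> (1::nat)" "sum f I \<le> card I"
  shows "\<forall>i\<in>I. f i = 1"
proof (rule ccontr)
  assume "\<not> (\<forall>i\<in>I. f i = 1)"
  then obtain j where j: "j \<in> I" "f j \<noteq> 1" by blast
  then have "f j \<ge> 2" using assms(2)[OF j(1)] j(2) by linarith
  have "sum f I = f j + sum f (I - {j})" by (rule sum.remove[OF assms(1) j(1)])
  moreover have "sum f (I - {j}) \<ge> sum (\<lambda>_. 1) (I - {j})" by (rule sum_mono) (use assms(2) in auto)
  moreover have "sum (\<lambda>_. 1::nat) (I - {j}) = card I - 1" using j assms(1) by simp
  moreover have "card I \<ge> 1" using j(1) assms(1) by (auto simp: Suc_le_eq card_gt_0_iff)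
  ultimately show False using assms(3) \<open>f j \<ge> 2\<close> by linarith
qed




theorem corollary1:
  fixes L :: "('k::{finite,field} ^ 'n) set set"
    and M P :: "('k ^ 'n) set"
  assumes "L \<noteq> {}"
    and "good_line_set L"
    and "psub 4 M"
    and "qM_point L M P"
  shows "(\<forall>m. pline m \<and> P \<subseteq> m \<and> m \<subseteq> pi_sub L P \<longrightarrow>
            card {X. qM_point L M X \<and> X \<subseteq> m \<and> X \<noteq> P} = 1)
       \<or> (\<exists>m. pline m \<and> P \<subseteq> m \<and> m \<subseteq> pi_sub L P \<and>
            {X. qM_point L M X \<and> X \<subseteq> m \<and> X \<noteq> P} = {})"
proof -
  note gl = assms(2)
  define q where "q = CARD('k)"
  have sM: "vec.subspace M" and dM: "vec.dim M = 5" using assms(3) by (auto simp: psub_def)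
  define E where "E = pi_sub L P"
  define LP where "LP = {l\<in>L. P \<subseteq> l}"
  have Pf: "ppoint P" "card LP = q + 1" "pi_sub L P \<subseteq> M"
    using qM_full[OF gl sM assms(4)] by (auto simp: LP_def q_def)
  have EM: "E \<subseteq> M" using Pf E_def by simp
  have pE: "pplane E" and linesE: "{l\<in>L. l \<subseteq> E} = LP"
    using full_point_plane[OF gl Pf(1)] Pf(2) by (auto simp: E_def LP_def q_def)
  have sE: "vec.subspace E" "vec.dim E = 3" using pE by (auto simp: psub_def)
  have sP: "vec.subspace P" "vec.dim P = 1" using Pf(1) by (auto simp: psub_def)
  have PE: "P \<subseteq> E"
  proof -
    have "LP \<noteq> {}" using Pf(2) by auto
    then obtain l where "l \<in> LP" by blast
    then show ?thesis using linesE by (auto simp: LP_def)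
  qed
  define \<M> where "\<M> = {m. pline m \<and> P \<subseteq> m \<and> m \<subseteq> E}"
  have LPM: "LP \<subseteq> \<M>" using linesE gl_line[OF gl] by (auto simp: \<M>_def LP_def)
  have "card \<M> \<le> q + 1"
  proof -
    have "\<M> \<subseteq> {C. vec.subspace C \<and> P \<subseteq> C \<and> C \<subseteq> E \<and> vec.dim C = vec.dim P + 1}"
      using sP by (auto simp: \<M>_def psub_def)
    then have "card \<M> \<le> card {C. vec.subspace C \<and> P \<subseteq> C \<and> C \<subseteq> E \<and> vec.dim C = vec.dim P + 1}"
      by (intro card_mono) auto
    also have "\<dots> \<le> q + 1" unfolding q_def by (rule count_mid) (use sP sE PE in auto)
    finally show ?thesis .
  qed
  moreover have "card LP \<le> card \<M>" by (rule card_mono[OF _ LPM]) simp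
  ultimately have "card LP = card \<M>" using Pf(2) by simp
  then have MLP: "\<M> = LP" using card_subset_eq[OF _ LPM] by simp
  define Q where "Q = {X. qM_point L M X \<and> X \<subseteq> E \<and> X \<noteq> P}"
  have Qf: "ppoint Z \<and> card {l\<in>L. Z \<subseteq> l} = q + 1 \<and> pplane (pi_sub L Z) \<and> pi_sub L Z \<subseteq> M
      \<and> {l\<in>L. l \<subseteq> pi_sub L Z} = {l\<in>L. Z \<subseteq> l} \<and> pi_sub L Z \<noteq> E" if "Z \<in> Q" for Z
  proof -
    have a: "ppoint Z" "card {l\<in>L. Z \<subseteq> l} = q + 1" "pi_sub L Z \<subseteq> M"
      using qM_full[OF gl sM, of Z] that by (auto simp: Q_def q_def)
    have "Z \<noteq> P" using that by (simp add: Q_def)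
    then have "pi_sub L Z \<noteq> E" unfolding E_def
      using full_distinct[OF gl a(1) _ Pf(1)] a(2) Pf(2) by (simp add: q_def LP_def)
    then show ?thesis using a full_point_plane[OF gl a(1)] by (simp add: q_def)
  qed
  define sol where "sol Z = vec.span (E \<union> pi_sub L Z)" for Z
  have solf: "psolid (sol Z) \<and> E \<subseteq> sol Z \<and> sol Z \<subseteq> M \<and> pi_sub L Z \<subseteq> sol Z" if Z: "Z \<in> Q" for Z
  proof -
    note f = Qf[OF Z]
    have ZE: "Z \<subseteq> E" "Z \<noteq> P" using Z by (auto simp: Q_def)
    define m where "m = vec.span (P \<union> Z)"
    have pm: "pline m" unfolding m_def by (rule two_points_line) (use Pf(1) f ZE in auto)
    have mE: "m \<subseteq> E" unfolding m_def by (rule vec.span_minimal[OF _ sE(1)]) (use PE ZE in auto)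
    have Pm: "P \<subseteq> m" "Z \<subseteq> m" unfolding m_def using vec.span_superset by blast+
    have "m \<in> \<M>" using pm mE Pm by (simp add: \<M>_def)
    then have "m \<in> L" using MLP by (simp add: LP_def)
    have eqZ: "{l\<in>L. l \<subseteq> pi_sub L Z} = {l\<in>L. Z \<subseteq> l}" using f by simp
    have "m \<in> {l\<in>L. l \<subseteq> pi_sub L Z}" unfolding eqZ using \<open>m \<in> L\<close> Pm by simp
    then have mZ: "m \<subseteq> pi_sub L Z" by simp
    have sZ: "vec.subspace (pi_sub L Z)" "vec.dim (pi_sub L Z) = 3" using f by (auto simp: psub_def)
    have sI: "vec.subspace (E \<inter> pi_sub L Z)" using sE sZ vec.subspace_inter by blast
    have "vec.dim (E \<inter> pi_sub L Z) \<ge> 2" using vec.dim_subset[of m "E \<inter> pi_sub L Z"] mE mZ pm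
      by (auto simp: psub_def)
    moreover have "E \<inter> pi_sub L Z \<noteq> E"
    proof
      assume "E \<inter> pi_sub L Z = E"
      then have "E \<subseteq> pi_sub L Z" by blast
      moreover have "pplane (pi_sub L Z)" using f by simp
      ultimately have "E = pi_sub L Z" using psub_eq[OF pE] by simp
      then show False using f by simp
    qed
    then have "vec.dim (E \<inter> pi_sub L Z) < 3" using dim_strict[OF sI sE(1)] sE by auto
    ultimately have "vec.dim (E \<inter> pi_sub L Z) = 2" by simp
    moreover have "vec.dim (sol Z) + vec.dim (E \<inter> pi_sub L Z) = vec.dim E + vec.dim (pi_sub L Z)"
      unfolding sol_def by (rule dim_span_Un[OF sE(1) sZ(1)])
    ultimately have "vec.dim (sol Z) = 4" using sE sZ by simp
    then have "psolid (sol Z)" by (simp add: psub_def sol_def vec.subspace_span)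
    moreover have "sol Z \<subseteq> M" unfolding sol_def
      by (rule vec.span_minimal[OF _ sM]) (use EM f in auto)
    moreover have "E \<subseteq> sol Z" "pi_sub L Z \<subseteq> sol Z" unfolding sol_def using vec.span_superset by blast+
    ultimately show ?thesis by simp
  qed
  have inj: "inj_on sol Q"
  proof (rule inj_onI)
    fix Z Z' assume Z: "Z \<in> Q" and Z': "Z' \<in> Q" and e: "sol Z = sol Z'"
    show "Z = Z'"
    proof (rule ccontr)
      assume ne: "Z \<noteq> Z'"
      have dZZ: "pi_sub L Z \<noteq> pi_sub L Z'"
        using full_distinct[OF gl, of Z Z'] Qf[OF Z] Qf[OF Z'] ne by (simp add: q_def)
      have cE: "card {l\<in>L. l \<subseteq> E} = CARD('k) + 1" using linesE Pf(2) by (simp add: q_def)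
      have fZ: "pplane (pi_sub L Z)" "pi_sub L Z \<noteq> E"
        "card {l\<in>L. l \<subseteq> pi_sub L Z} = CARD('k) + 1" using Qf[OF Z] by (simp_all add: q_def)
      have fZ': "pplane (pi_sub L Z')" "pi_sub L Z' \<noteq> E"
        "card {l\<in>L. l \<subseteq> pi_sub L Z'} = CARD('k) + 1" using Qf[OF Z'] by (simp_all add: q_def)
      have sZ: "psolid (sol Z)" "E \<subseteq> sol Z" "pi_sub L Z \<subseteq> sol Z" using solf[OF Z] by simp_all
      have "pi_sub L Z' \<subseteq> sol Z" using solf[OF Z'] e by simp
      show False
        by (rule three_planes[OF gl sZ(1) pE fZ(1) fZ'(1) fZ(2)[symmetric] fZ'(2)[symmetric] dZZ
              sZ(2) sZ(3) \<open>pi_sub L Z' \<subseteq> sol Z\<close> cE fZ(3) fZ'(3)])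
    qed
  qed
  have "card Q \<le> q + 1"
  proof -
    have "sol ` Q \<subseteq> {C. vec.subspace C \<and> E \<subseteq> C \<and> C \<subseteq> M \<and> vec.dim C = vec.dim E + 1}"
      using solf sE by (auto simp: psub_def)
    then have "card Q \<le> card {C. vec.subspace C \<and> E \<subseteq> C \<and> C \<subseteq> M \<and> vec.dim C = vec.dim E + 1}"
      using card_inj_on_le[OF inj] by auto
    also have "\<dots> \<le> q + 1" unfolding q_def by (rule count_mid) (use sE sM EM dM in auto)
    finally show ?thesis .
  qed
  define Qm where "Qm m = {X. qM_point L M X \<and> X \<subseteq> m \<and> X \<noteq> P}" for m
  show ?thesis
  proof (cases "\<exists>m\<in>\<M>. Qm m = {}")
    case True
    then obtain m where "m \<in> \<M>" "Qm m = {}" by blast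
    then show ?thesis unfolding Qm_def \<M>_def E_def by (intro disjI2 exI[of _ m]) simp
  next
    case False
    have QU: "Q = (\<Union>m\<in>\<M>. Qm m)"
    proof
      show "(\<Union>m\<in>\<M>. Qm m) \<subseteq> Q" by (auto simp: Qm_def Q_def \<M>_def)
      show "Q \<subseteq> (\<Union>m\<in>\<M>. Qm m)"
      proof
        fix X assume X: "X \<in> Q"
        have pX: "ppoint X" using X by (simp add: Q_def qM_point_def)
        define m where "m = vec.span (P \<union> X)"
        have pm: "pline m" unfolding m_def by (rule two_points_line) (use Pf(1) pX X in \<open>auto simp: Q_def\<close>)
        have mE: "m \<subseteq> E" unfolding m_def by (rule vec.span_minimal[OF _ sE(1)]) (use PE X in \<open>auto simp: Q_def\<close>)
        have Pm: "P \<subseteq> m" "X \<subseteq> m" unfolding m_def using vec.span_superset by blast+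
        have "m \<in> \<M>" using pm mE Pm by (simp add: \<M>_def)
        moreover have "X \<in> Qm m" using X Pm by (simp add: Q_def Qm_def)
        ultimately show "X \<in> (\<Union>m\<in>\<M>. Qm m)" by blast
      qed
    qed
    have disj: "Qm m \<inter> Qm m' = {}" if "m \<in> \<M>" "m' \<in> \<M>" "m \<noteq> m'" for m m'
    proof (rule ccontr)
      assume "Qm m \<inter> Qm m' \<noteq> {}"
      then obtain X where X: "X \<in> Qm m" "X \<in> Qm m'" by blast
      have "ppoint X" "X \<subseteq> m" "X \<subseteq> m'" using X by (simp_all add: Qm_def qM_point_def)
      moreover have "pline m" "pline m'" "P \<subseteq> m" "P \<subseteq> m'" using that by (simp_all add: \<M>_def)
      ultimately have "X = P" using lines_meet_point[of m m' X P] that(3) Pf(1) by blast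
      then show False using X by (simp add: Qm_def)
    qed
    have "card Q = (\<Sum>m\<in>\<M>. card (Qm m))"
      unfolding QU by (rule card_UN_disjoint) (use disj in auto)
    then have "(\<Sum>m\<in>\<M>. card (Qm m)) \<le> card \<M>" using \<open>card Q \<le> q + 1\<close> MLP Pf(2) by simp
    moreover have "card (Qm m) \<ge> 1" if "m \<in> \<M>" for m
      using False that by (simp add: Suc_le_eq card_gt_0_iff)
    ultimately have "\<forall>m\<in>\<M>. card (Qm m) = 1" using sum_ge1[of \<M> "\<lambda>m. card (Qm m)"] by simp
    show ?thesis
    proof (rule disjI1, intro allI impI)
      fix m assume "pline m \<and> P \<subseteq> m \<and> m \<subseteq> pi_sub L P"
      then have "m \<in> \<M>" by (simp add: \<M>_def E_def)
      then show "card {X. qM_point L M X \<and> X \<subseteq> m \<and> X \<noteq> P} = 1"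
        using \<open>\<forall>m\<in>\<M>. card (Qm m) = 1\<close> by (simp add: Qm_def)
    qed
  qed
qed


end
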